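(* Suppose $EAE(V)<\infty$. Then the condition "$\mathbb{E}[V(yZ_T^0)]<\infty$ for all $y>0$" holds if and only if $u(x,U)<\infty$ for some $x>0$.
   Context: Fix $T>0$ and a filtered probability space $(\Omega,\mathcal F,(\mathcal F_t)_{0\le t\le T},\mathbf P)$ satisfying the usual conditions. Fix $0<\lambda<1$ and a strictly positive càdlàg adapted stock price $S$. A $\lambda$-consistent price system is a strictly positive process $Z=(Z^0,Z^1)$ with $Z^0_0=1$, $Z^0$ a $\mathbf P$-martingale, $Z^1$ a $\mathbf P$-local martingale, and $Z^1_t/Z^0_t\in[(1-\lambda)S_t,S_t]$ a.s. for all $t$. Standing assumption: one such $Z$ is fixed. Following the paper, $\mathcal C(x)=\{f\in L^0_+(\mathbf P):\mathbb{E}[Z_T^0 f]\le x\}$ for $x>0$. A utility is a function $U:(0,\infty)\to\mathbb R$ that is non-constant, increasing, upper semicontinuous, with $U(\infty):=\lim_{x\to\infty}U(x)>0$ and $\lim_{x\to\infty}U(x)/x=0$; $U$ need not be concave. Set $U(0):=\lim_{x\downarrow0}U(x)$. For $f\ge0$, $\mathbb{E}[U(f)]:=-\infty$ if $U^-(f)\notin L^1$. The value function is $u(x,U):=\sup\{\mathbb{E}[U(f)]:f\in\mathcal C(x)\}$. The convex conjugate is $V(y):=\sup_{x>0}\{U(x)-xy\}$ (a convex, decreasing function finite on $(0,\infty)$), $\partial V(y)$ denotes its subdifferential at $y$, and the extended asymptotic elasticity is $EAE(V):=\limsup_{y\to0}\sup_{q\in\partial V(y)}\frac{|q|\,y}{V(y)}$.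 *)

theory Defs
  imports "HOL-Probability.Probability"
begin

definition is_utility :: "(real \<Rightarrow> real) \<Rightarrow> bool" where
  "is_utility U \<longleftrightarrow>
     (\<exists>a>0. \<exists>b>0. U a \<noteq> U b) \<and>
     mono_on {0<..} U \<and>
     (\<forall>x>0. \<forall>c. U x < c \<longrightarrow> (\<forall>\<^sub>F z in at x within {0<..}. U z < c)) \<and>
     (\<exists>L::ereal. ((\<lambda>x. ereal (U x)) \<longlongrightarrow> L) at_top \<and> L > 0) \<and>
     ((\<lambda>x. U x / x) \<longlongrightarrow> 0) at_top"

definition Uext :: "(real \<Rightarrow> real) \<Rightarrow> real \<Rightarrow> ereal" where
  "Uext U x = (if x > 0 then ereal (U x) else Lim (at_right 0) (\<lambda>z. ereal (U z)))"

definition expected_utility :: "'a measure \<Rightarrow> (real \<Rightarrow> real) \<Rightarrow> ('a \<Rightarrow> real) \<Rightarrow> ereal" where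
  "expected_utility M U f =
     (let P = (\<integral>\<^sup>+ w. e2ennreal (max 0 (Uext U (f w))) \<partial>M);
          N = (\<integral>\<^sup>+ w. e2ennreal (max 0 (- Uext U (f w))) \<partial>M)
      in if N = \<infinity> then -\<infinity> else enn2ereal P - enn2ereal N)"

definition budget_set :: "'a measure \<Rightarrow> ('a \<Rightarrow> real) \<Rightarrow> real \<Rightarrow> ('a \<Rightarrow> real) set" where
  "budget_set M ZT x = {f. f \<in> borel_measurable M \<and> (\<forall>w\<in>space M. 0 \<le> f w) \<and>
       (\<integral>\<^sup>+ w. ennreal (ZT w * f w) \<partial>M) \<le> ennreal x}"

definition value_fun :: "'a measure \<Rightarrow> ('a \<Rightarrow> real) \<Rightarrow> real \<Rightarrow> (real \<Rightarrow> real) \<Rightarrow> ereal" where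
  "value_fun M ZT x U = (SUP f\<in>budget_set M ZT x. expected_utility M U f)"

definition conj_V :: "(real \<Rightarrow> real) \<Rightarrow> real \<Rightarrow> real" where
  "conj_V U y = (SUP x\<in>{0<..}. U x - x * y)"

definition subdiff_V :: "(real \<Rightarrow> real) \<Rightarrow> real \<Rightarrow> real set" where
  "subdiff_V U y = {q. \<forall>z>0. conj_V U y + q * (z - y) \<le> conj_V U z}"

definition EAE :: "(real \<Rightarrow> real) \<Rightarrow> ereal" where
  "EAE U = Limsup (at_right 0)
     (\<lambda>y. SUP q\<in>subdiff_V U y. ereal (\<bar>q\<bar> * y / conj_V U y))"

end

theory Submission
  imports Defs
begin


lemma cell:
  fixes v :: real assumes "v > 0"
  shows "2 powr real_of_int \<lfloor>log 2 v\<rfloor> \<le> v" "v < 2 * 2 powr real_of_int \<lfloor>log 2 v\<rfloor>"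
proof -
  have "2 powr real_of_int \<lfloor>log 2 v\<rfloor> \<le> 2 powr (log 2 v)"
    by (intro powr_mono) auto
  then show "2 powr real_of_int \<lfloor>log 2 v\<rfloor> \<le> v" using assms by simp
  have "v = 2 powr (log 2 v)" using assms by simp
  also have "\<dots> < 2 powr (real_of_int \<lfloor>log 2 v\<rfloor> + 1)"
    by (intro powr_less_mono) linarith+
  also have "\<dots> = 2 * 2 powr real_of_int \<lfloor>log 2 v\<rfloor>" by (simp add: powr_add)
  finally show "v < 2 * 2 powr real_of_int \<lfloor>log 2 v\<rfloor>" .
qed

locale util =
  fixes U :: "real \<Rightarrow> real"
  assumes mono: "mono_on {0<..} U"
    and usc: "\<forall>x>0. \<forall>c. U x < c \<longrightarrow> (\<forall>\<^sub>F z in at x within {0<..}. U z < c)"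
    and lim0: "((\<lambda>x. U x / x) \<longlongrightarrow> 0) at_top"
begin

abbreviation V where "V \<equiv> conj_V U"

lemma monoD': "0 < x \<Longrightarrow> x \<le> y \<Longrightarrow> U x \<le> U y"
  using mono by (auto simp: mono_on_def)

lemma lin_bound:
  assumes "e > 0" shows "\<exists>K. \<forall>x>0. U x \<le> e * x + K"
proof -
  have "\<forall>\<^sub>F x in at_top. U x / x < e"
    using order_tendstoD(2)[OF lim0] assms by auto
  then obtain N where N: "\<And>x. x \<ge> N \<Longrightarrow> U x / x < e"
    by (auto simp: eventually_at_top_linorder)
  define N' where "N' = max N 1"
  have "U x \<le> e * x + \<bar>U N'\<bar>" if "x > 0" for x
  proof (cases "x \<ge> N'")
    case True
    then have "x > 0" "U x / x < e" using N N'_def by auto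
    then have "U x < e * x" by (simp add: divide_less_eq mult.commute)
    then show ?thesis by simp
  next
    case False
    then have "U x \<le> U N'" using monoD'[OF that] by simp
    moreover have "e * x \<ge> 0" using assms that by simp
    ultimately show ?thesis by linarith
  qed
  then show ?thesis by blast
qed

lemma bdd:
  assumes "\<eta> > 0" shows "bdd_above ((\<lambda>x. U x - x * \<eta>) ` {0<..})"
proof -
  obtain K where K: "\<And>x. x>0 \<Longrightarrow> U x \<le> \<eta> * x + K" using lin_bound[OF assms] by blast
  show ?thesis by (rule bdd_aboveI[of _ K]) (auto dest: K simp: algebra_simps)
qed

lemma V_ge: "\<eta> > 0 \<Longrightarrow> x > 0 \<Longrightarrow> U x - x * \<eta> \<le> V \<eta>"
  unfolding conj_V_def by (rule cSUP_upper[OF _ bdd]) auto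

lemma U_le: "\<eta> > 0 \<Longrightarrow> x > 0 \<Longrightarrow> U x \<le> V \<eta> + \<eta> * x"
  using V_ge[of \<eta> x] by (simp add: algebra_simps)

lemma V_le: "\<eta> > 0 \<Longrightarrow> (\<And>x. x > 0 \<Longrightarrow> U x - x * \<eta> \<le> B) \<Longrightarrow> V \<eta> \<le> B"
  unfolding conj_V_def by (rule cSUP_least) auto

lemma V_near: "\<eta> > 0 \<Longrightarrow> e > 0 \<Longrightarrow> \<exists>x>0. U x - x * \<eta> > V \<eta> - e"
proof (rule ccontr)
  assume "\<eta> > 0" "e > 0" "\<not> (\<exists>x>0. U x - x * \<eta> > V \<eta> - e)"
  then have "V \<eta> \<le> V \<eta> - e" by (intro V_le) auto
  with \<open>e > 0\<close> show False by simp
qed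

lemma V_antimono: "0 < a \<Longrightarrow> a \<le> b \<Longrightarrow> V b \<le> V a"
proof (rule V_le)
  fix x :: real assume "0 < a" "a \<le> b" "x > 0"
  then have "U x - x * b \<le> U x - x * a" by (simp add: mult_left_mono)
  also have "\<dots> \<le> V a" using V_ge \<open>0<a\<close> \<open>x>0\<close> by simp
  finally show "U x - x * b \<le> V a" .
qed simp

lemma V_convex: "convex_on {0<..} V"
proof (rule convex_onI)
  fix t x y :: real assume t: "0 < t" "t < 1" and xy: "x \<in> {0<..}" "y \<in> {0<..}"
  have pos: "(1 - t) *\<^sub>R x + t *\<^sub>R y > 0" using t xy by (simp add: add_pos_pos)
  show "V ((1 - t) *\<^sub>R x + t *\<^sub>R y) \<le> (1 - t) * V x + t * V y"
  proof (rule V_le[OF pos])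
    fix u :: real assume u: "u > 0"
    have "U u - u * ((1 - t) *\<^sub>R x + t *\<^sub>R y) = (1 - t) * (U u - u * x) + t * (U u - u * y)"
      by (simp add: algebra_simps)
    also have "\<dots> \<le> (1 - t) * V x + t * V y"
      using t xy u by (intro add_mono mult_left_mono V_ge) auto
    finally show "U u - u * ((1 - t) *\<^sub>R x + t *\<^sub>R y) \<le> (1 - t) * V x + t * V y" .
  qed
qed simp

lemma V_cont: "continuous_on {0<..} V"
  by (rule convex_on_continuous[OF _ V_convex]) simp

lemma subgrad_ex:
  assumes a: "a > 0" shows "\<exists>q. \<forall>z>0. V a + q * (z - a) \<le> V z"
proof -
  define S where "S = (\<lambda>z. (V a - V z) / (a - z)) ` {0<..<a}"
  have slope: "(V a - V z) / (a - z) \<le> (V w - V a) / (w - a)" if "0 < z" "z < a" "a < w" for z w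
  proof -
    have h: "(V z - V w) / (z - w) \<le> (V a - V w) / (a - w)"
      "(V z - V a) / (z - a) \<le> (V z - V w) / (z - w)"
      using convex_on_slope_le[OF V_convex, of z w a] that by auto
    have "(V a - V z) / (a - z) = (V z - V a) / (z - a)"
      by (simp add: divide_simps) (auto simp: algebra_simps)
    moreover have "(V w - V a) / (w - a) = (V a - V w) / (a - w)"
      by (simp add: divide_simps) (auto simp: algebra_simps)
    ultimately show ?thesis using h by linarith
  qed
  have ne: "S \<noteq> {}" using a unfolding S_def by auto
  have bS: "bdd_above S" unfolding S_def
    by (rule bdd_aboveI[of _ "(V (a+1) - V a) / ((a+1) - a)"]) (use slope[of _ "a+1"] in auto)
  define q where "q = Sup S"
  have "V a + q * (z - a) \<le> V z" if z: "z > 0" for z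
  proof (cases z a rule: linorder_cases)
    case less
    have "(V a - V z) / (a - z) \<le> q" unfolding q_def
      by (rule cSup_upper[OF _ bS]) (use less z in \<open>auto simp: S_def\<close>)
    then have "V a - V z \<le> q * (a - z)" using less by (simp add: divide_le_eq)
    then show ?thesis by (simp add: algebra_simps)
  next
    case equal then show ?thesis by simp
  next
    case greater
    have "q \<le> (V z - V a) / (z - a)" unfolding q_def
      by (rule cSup_least[OF ne]) (use slope greater in \<open>auto simp: S_def\<close>)
    then have "q * (z - a) \<le> V z - V a" using greater by (simp add: le_divide_eq)
    then show ?thesis by (simp add: algebra_simps)
  qed
  then show ?thesis by blast
qed

end



context util begin

lemma Uext0: "z > 0 \<Longrightarrow> Uext U x \<le> ereal (U z) \<or> x > 0"
proof -
  assume z: "z > 0"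
  define L where "L = (INF z\<in>{0<..}. ereal (U z))"
  have tends: "((\<lambda>z. ereal (U z)) \<longlongrightarrow> L) (at_right 0)"
  proof (rule order_tendstoI)
    fix a assume "a < L"
    have "\<forall>z>0. a < ereal (U z)"
    proof (intro allI impI)
      fix z :: real assume "z > 0"
      then have "L \<le> ereal (U z)" unfolding L_def by (intro INF_lower) auto
      with \<open>a < L\<close> show "a < ereal (U z)" by simp
    qed
    then show "\<forall>\<^sub>F z in at_right 0. a < ereal (U z)"
      unfolding eventually_at_right_field by (intro exI[of _ 1]) auto
  next
    fix a assume "L < a"
    then obtain z0 where z0: "z0 > 0" "ereal (U z0) < a" unfolding L_def by (auto simp: INF_less_iff)
    have "\<forall>z>0. z < z0 \<longrightarrow> ereal (U z) < a"
    proof (intro allI impI)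
      fix z :: real assume "z > 0" "z < z0"
      then have "U z \<le> U z0" by (intro monoD') auto
      then have "ereal (U z) \<le> ereal (U z0)" by simp
      then show "ereal (U z) < a" using z0(2) by (rule le_less_trans)
    qed
    then show "\<forall>\<^sub>F z in at_right 0. ereal (U z) < a"
      unfolding eventually_at_right_field using z0 by blast
  qed
  have "Lim (at_right 0) (\<lambda>z. ereal (U z)) = L" by (rule tendsto_Lim[OF _ tends]) simp
  moreover have "L \<le> ereal (U z)" unfolding L_def using z by (intro INF_lower) auto
  ultimately show ?thesis unfolding Uext_def by auto
qed

lemma Uext_le: "x \<ge> 0 \<Longrightarrow> \<eta> > 0 \<Longrightarrow> Uext U x \<le> ereal (V \<eta> + \<eta> * x)"
proof -
  assume x: "x \<ge> 0" and e: "\<eta> > 0"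
  show ?thesis
  proof (cases "x > 0")
    case True then show ?thesis using U_le[OF e True] by (simp add: Uext_def)
  next
    case False
    then have x0: "x = 0" using x by simp
    have "Uext U x \<le> ereal (V \<eta> + \<eta> * z)" if "z > 0" for z
      using Uext0[OF that, of x] U_le[OF e that] x0 by (auto intro: order_trans)
    have "Uext U x \<le> ereal (V \<eta>) + ereal h" if h: "h > 0" for h
    proof -
      have "Uext U x \<le> ereal (V \<eta> + \<eta> * (h / \<eta>))" using h e by (intro \<open>\<And>z. z > 0 \<Longrightarrow> _\<close>) simp
      also have "\<eta> * (h / \<eta>) = h" using e by simp
      finally show ?thesis by simp
    qed
    then have "Uext U x \<le> ereal (V \<eta>)" by (rule ereal_le_epsilon2)
    then show ?thesis using x0 by simp
  qed
qed

lemma V_meas: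
  assumes "Z \<in> borel_measurable M" "\<And>w. w \<in> space M \<Longrightarrow> Z w > 0"
  shows "(\<lambda>w. V (Z w)) \<in> borel_measurable M"
proof -
  have "(\<lambda>\<eta>. if \<eta> \<in> {0<..} then V \<eta> else 0) \<in> borel_measurable borel"
    by (intro borel_measurable_continuous_on_if V_cont) auto
  from measurable_compose[OF assms(1) this]
  have "(\<lambda>w. if Z w \<in> {0<..} then V (Z w) else 0) \<in> borel_measurable M" .
  then show ?thesis by (rule measurable_cong[THEN iffD1, rotated]) (use assms(2) in auto)
qed

lemma ennreal_add_le: "ennreal (a + b) \<le> ennreal a + ennreal (b::real)"
proof (cases "a \<ge> 0 \<and> b \<ge> 0")
  case True then show ?thesis by (simp add: ennreal_plus)
next
  case False
  then have "a + b \<le> b \<or> a + b \<le> a" by auto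
  then have "ennreal (a + b) \<le> ennreal b \<or> ennreal (a + b) \<le> ennreal a" using ennreal_leI by blast
  moreover have "ennreal b \<le> ennreal a + ennreal b" "ennreal a \<le> ennreal a + ennreal b" by simp_all
  ultimately show ?thesis by (meson order_trans)
qed

lemma dir1:
  assumes P: "prob_space M" and Zm: "ZT \<in> borel_measurable M" and Zp: "\<forall>w\<in>space M. 0 < ZT w"
    and fin: "(\<integral>\<^sup>+ w. ennreal (V (ZT w)) \<partial>M) < \<infinity>"
  shows "value_fun M ZT 1 U < \<infinity>"
proof -
  define Q where "Q = (\<integral>\<^sup>+ w. ennreal (V (ZT w)) \<partial>M)"
  have "expected_utility M U f \<le> enn2ereal (Q + 1)" if f: "f \<in> budget_set M ZT 1" for f
  proof -
    have fm: "f \<in> borel_measurable M" and f0: "\<And>w. w \<in> space M \<Longrightarrow> 0 \<le> f w"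
      and bud: "(\<integral>\<^sup>+ w. ennreal (ZT w * f w) \<partial>M) \<le> 1"
      using f by (auto simp: budget_set_def)
    define Pp where "Pp = (\<integral>\<^sup>+ w. e2ennreal (max 0 (Uext U (f w))) \<partial>M)"
    have pw: "e2ennreal (max 0 (Uext U (f w))) \<le> ennreal (V (ZT w)) + ennreal (ZT w * f w)"
      if w: "w \<in> space M" for w
    proof -
      have "Uext U (f w) \<le> ereal (V (ZT w) + ZT w * f w)" using Uext_le f0 Zp w by auto
      then have "max 0 (Uext U (f w)) \<le> max 0 (ereal (V (ZT w) + ZT w * f w))" by (rule max.mono[OF order_refl])
      then have "e2ennreal (max 0 (Uext U (f w))) \<le> e2ennreal (max 0 (ereal (V (ZT w) + ZT w * f w)))"
        by (rule e2ennreal_mono)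
      also have "\<dots> = ennreal (V (ZT w) + ZT w * f w)"
        by (cases "V (ZT w) + ZT w * f w \<ge> 0") (auto simp: max_def zero_ereal_def e2ennreal_neg ennreal_neg)
      also have "\<dots> \<le> ennreal (V (ZT w)) + ennreal (ZT w * f w)" by (rule ennreal_add_le)
      finally show ?thesis .
    qed
    have "Pp \<le> (\<integral>\<^sup>+ w. ennreal (V (ZT w)) + ennreal (ZT w * f w) \<partial>M)"
      unfolding Pp_def by (intro nn_integral_mono pw)
    also have "\<dots> = Q + (\<integral>\<^sup>+ w. ennreal (ZT w * f w) \<partial>M)" unfolding Q_def
    proof (rule nn_integral_add)
      show "(\<lambda>w. ennreal (V (ZT w))) \<in> borel_measurable M" using V_meas[OF Zm] Zp by simp
      show "(\<lambda>w. ennreal (ZT w * f w)) \<in> borel_measurable M" using Zm fm by simp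
    qed
    also have "\<dots> \<le> Q + 1" using bud by (simp add: add_left_mono)
    finally have Pp: "Pp \<le> Q + 1" .
    show ?thesis
    proof (cases "(\<integral>\<^sup>+ w. e2ennreal (max 0 (- Uext U (f w))) \<partial>M) = \<infinity>")
      case True then show ?thesis by (simp add: expected_utility_def)
    next
      case False
      then have "expected_utility M U f = enn2ereal Pp - enn2ereal (\<integral>\<^sup>+ w. e2ennreal (max 0 (- Uext U (f w))) \<partial>M)"
        by (simp add: expected_utility_def Pp_def Let_def)
      also have "\<dots> \<le> enn2ereal Pp"
        using False by (cases "enn2ereal Pp") (auto simp: ereal_diff_le_self)
      also have "\<dots> \<le> enn2ereal (Q + 1)" using Pp by (simp add: less_eq_ennreal.rep_eq)
      finally show ?thesis .
    qed
  qed
  then have "value_fun M ZT 1 U \<le> enn2ereal (Q + 1)" unfolding value_fun_def by (rule SUP_least)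
  also have "\<dots> < \<infinity>" using fin unfolding Q_def by (simp add: less_top[symmetric])
  finally show ?thesis .
qed

end

locale util2 = util +
  fixes C \<eta>0 :: real
  assumes unb: "\<And>B. \<exists>x>0. U x > B"
    and C1: "C \<ge> 1" and eta0: "\<eta>0 > 0"
    and Vpos: "\<And>y. 0 < y \<Longrightarrow> y < \<eta>0 \<Longrightarrow> V y \<ge> 1"
    and eae: "\<And>y q. 0 < y \<Longrightarrow> y < \<eta>0 \<Longrightarrow> q \<in> subdiff_V U y \<Longrightarrow> \<bar>q\<bar> * y \<le> C * V y"
begin

lemma growth1:
  assumes "0 < a" "a < \<eta>" "\<eta> < \<eta>0" "\<eta> \<le> a * (1 + 1 / (2 * C))"
  shows "V a \<le> 2 * V \<eta>"
proof -
  obtain q where q: "\<And>z. z > 0 \<Longrightarrow> V a + q * (z - a) \<le> V z" using subgrad_ex[OF assms(1)] by blast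
  have "q \<in> subdiff_V U a" using q by (auto simp: subdiff_V_def)
  then have qa: "\<bar>q\<bar> * a \<le> C * V a" using eae assms by auto
  have "\<eta> - a \<le> a / (2 * C)" using assms(4) C1 by (simp add: algebra_simps)
  then have "\<bar>q\<bar> * (\<eta> - a) \<le> \<bar>q\<bar> * (a / (2 * C))" by (rule mult_left_mono) simp
  also have "\<dots> = (\<bar>q\<bar> * a) / (2 * C)" by simp
  also have "\<dots> \<le> (C * V a) / (2 * C)" by (rule divide_right_mono[OF qa]) (use C1 in simp)
  also have "\<dots> = V a / 2" using C1 by simp
  finally have h: "\<bar>q\<bar> * (\<eta> - a) \<le> V a / 2" .
  have "V a + q * (\<eta> - a) \<le> V \<eta>" using q assms by auto
  moreover have "- (\<bar>q\<bar> * (\<eta> - a)) \<le> q * (\<eta> - a)" using assms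
  proof -
    have "- \<bar>q\<bar> \<le> q" by simp
    then have "- \<bar>q\<bar> * (\<eta> - a) \<le> q * (\<eta> - a)" using assms by (intro mult_right_mono) auto
    then show ?thesis by simp
  qed
  ultimately show ?thesis using h by linarith
qed

lemma growthn:
  assumes "0 < \<eta>" "\<eta> < \<eta>0"
  shows "V (\<eta> / (1 + 1 / (2 * C)) ^ n) \<le> 2 ^ n * V \<eta>"
proof (induction n)
  case 0 then show ?case by simp
next
  case (Suc n)
  define r where "r = 1 + 1 / (2 * C)"
  have r1: "r > 1" using C1 by (simp add: r_def)
  have rn: "r ^ n \<ge> 1" using r1 by simp
  define b where "b = \<eta> / r ^ n"
  have b: "0 < b" "b \<le> \<eta>" using assms rn r1 by (auto simp: b_def divide_le_eq)
  have "V (b / r) \<le> 2 * V b"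
    using b r1 assms by (intro growth1[folded r_def]) (auto simp: divide_less_eq)
  also have "\<dots> \<le> 2 * (2 ^ n * V \<eta>)" using Suc.IH by (simp add: b_def r_def)
  moreover have "\<eta> / r ^ Suc n = b / r" using r1 by (simp add: b_def)
  ultimately show ?case by (simp add: r_def)
qed

lemma growth:
  assumes "0 < y0" "y0 \<le> y"
  shows "\<exists>K>0. \<forall>z>0. y * z < \<eta>0 \<longrightarrow> V (y0 * z) \<le> K * V (y * z)"
proof -
  define r where "r = 1 + 1 / (2 * C)"
  have r1: "r > 1" using C1 by (simp add: r_def)
  obtain n where n: "y / y0 < r ^ n" using real_arch_pow[OF r1] by blast
  have "V (y0 * z) \<le> 2 ^ n * V (y * z)" if "z > 0" "y * z < \<eta>0" for z
  proof -
    have pos: "0 < y * z" using assms that by simp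
    have "y < r ^ n * y0" using n assms by (simp add: divide_less_eq)
    then have "y * z \<le> (r ^ n * y0) * z" using that by (intro mult_right_mono) auto
    then have "y * z / r ^ n \<le> y0 * z" using r1
      by (subst pos_divide_le_eq) (auto simp: algebra_simps)
    moreover have "0 < y * z / r ^ n" using pos r1 by simp
    ultimately have "V (y0 * z) \<le> V (y * z / r ^ n)" by (intro V_antimono)
    also have "\<dots> \<le> 2 ^ n * V (y * z)" using growthn[OF pos that(2)] by (simp add: r_def)
    finally show ?thesis .
  qed
  then show ?thesis by (intro exI[of _ "2 ^ n"]) auto
qed


lemma minimizer:
  assumes f: "f > 0" shows "\<exists>\<eta>>0. \<forall>z>0. V \<eta> + \<eta> * f \<le> V z + z * f"
proof -
  define \<phi> where "\<phi> = (\<lambda>\<eta>. V \<eta> + \<eta> * f)"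
  obtain x1 where x1: "x1 > 0" "U x1 > \<phi> 1 + 1" using unb by blast
  define a where "a = min (1/2) (1 / (2 * x1))"
  define b where "b = max 1 (2 * (\<bar>\<phi> 1\<bar> + \<bar>U (f/2)\<bar> + 1) / f)"
  have a: "0 < a" "a \<le> 1" using x1 by (auto simp: a_def)
  have b: "1 \<le> b" by (simp add: b_def)
  have low: "\<phi> z > \<phi> 1" if "0 < z" "z \<le> a" for z
  proof -
    have "x1 * z \<le> x1 * (1 / (2 * x1))" using that x1 by (intro mult_left_mono) (auto simp: a_def)
    then have "x1 * z \<le> 1/2" using x1 by simp
    moreover have "U x1 - x1 * z \<le> V z" using V_ge that x1 by simp
    moreover have "z * f \<ge> 0" using that f by simp
    ultimately show ?thesis using x1 unfolding \<phi>_def by (simp add: algebra_simps)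
  qed
  have high: "\<phi> z > \<phi> 1" if "z \<ge> b" for z
  proof -
    have z0: "z > 0" using that b by simp
    have "U (f/2) - (f/2) * z \<le> V z" using V_ge[of z "f/2"] z0 f by simp
    moreover have "2 * (\<bar>\<phi> 1\<bar> + \<bar>U (f/2)\<bar> + 1) / f \<le> z" using that by (simp add: b_def)
    then have "2 * (\<bar>\<phi> 1\<bar> + \<bar>U (f/2)\<bar> + 1) \<le> z * f" using f by (simp add: divide_le_eq)
    ultimately have "U (f/2) - (f/2) * z \<le> V z" "2 * (\<bar>\<phi> 1\<bar> + \<bar>U (f/2)\<bar> + 1) \<le> z * f" by auto
    moreover have "\<phi> 1 \<le> \<bar>\<phi> 1\<bar>" "- U (f/2) \<le> \<bar>U (f/2)\<bar>" by auto
    moreover have "\<phi> z = V z + z * f" by (simp add: \<phi>_def)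
    ultimately show ?thesis by (simp add: algebra_simps)
  qed
  have cont: "continuous_on {a..b} \<phi>" unfolding \<phi>_def
    by (intro continuous_intros continuous_on_subset[OF V_cont]) (use a in auto)
  obtain e where e: "e \<in> {a..b}" "\<And>z. z \<in> {a..b} \<Longrightarrow> \<phi> e \<le> \<phi> z"
    using continuous_attains_inf[OF compact_Icc _ cont] a b by fastforce
  have "\<phi> e \<le> \<phi> z" if "z > 0" for z
  proof -
    have e1: "\<phi> e \<le> \<phi> 1" using e a b by auto
    show ?thesis
    proof (cases "z \<in> {a..b}")
      case True then show ?thesis using e by auto
    next
      case False
      then have "z < a \<or> z > b" by auto
      then show ?thesis
      proof
        assume "z < a" then have "\<phi> 1 < \<phi> z" using low[OF that] by simp
        then show ?thesis using e1 by simp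
      next
        assume "b < z" then have "\<phi> 1 < \<phi> z" using high by simp
        then show ?thesis using e1 by simp
      qed
    qed
  qed
  moreover have "e > 0" using e a by auto
  ultimately show ?thesis unfolding \<phi>_def by blast
qed

lemma small_h:
  fixes p r c :: real
  assumes "c > 0" "\<And>h. h > 0 \<Longrightarrow> p > r - h * c" shows "p \<ge> r"
proof (rule ccontr)
  assume "\<not> p \<ge> r"
  then have "(r - p) / (2 * c) > 0" using assms by simp
  from assms(2)[OF this] have "p > r - ((r - p) / (2 * c)) * c" .
  moreover have "((r - p) / (2 * c)) * c = (r - p) / 2" using assms(1) by simp
  ultimately have "r - (r - p) / 2 < p" using assms(1) by simp
  then have "r < p" by (simp add: field_simps)
  then show False using \<open>\<not> p \<ge> r\<close> by simp
qed

lemma min_le_U: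
  assumes f: "f > 0" and e: "e > 0" and m: "\<And>z. z > 0 \<Longrightarrow> V e + e * f \<le> V z + z * f"
  shows "V e \<le> U f"
proof (rule ccontr)
  assume "\<not> V e \<le> U f"
  then have "U f < V e" by simp
  with usc f have "\<forall>\<^sub>F z in at f within {0<..}. U z < V e" by blast
  then obtain d where d: "d > 0" "\<And>z. z \<in> {0<..} \<Longrightarrow> z \<noteq> f \<Longrightarrow> dist z f < d \<Longrightarrow> U z < V e"
    unfolding eventually_at by blast
  define \<delta> where "\<delta> = d / 2"
  have \<delta>: "\<delta> > 0" "\<delta> < d" using d by (auto simp: \<delta>_def)
  have lt: "U (f + \<delta>) < V e" using d(2)[of "f + \<delta>"] \<delta> f by (auto simp: dist_real_def)
  have "U (f + \<delta>) > V e - h * (f + \<delta>)" if h: "h > 0" for h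
  proof -
    have eh: "e + h > 0" using e h by simp
    obtain x where x: "x > 0" "U x - x * (e + h) > V (e + h) - h * \<delta>"
      using V_near[OF eh, of "h * \<delta>"] h \<delta> by auto
    have m1: "V (e + h) \<ge> V e - h * f" using m[OF eh] by (simp add: algebra_simps)
    have m2: "U x - x * e \<le> V e" using V_ge e x by simp
    have "x * h < h * f + h * \<delta>" using x m1 m2 by (simp add: algebra_simps)
    then have "x * h < (f + \<delta>) * h" by (simp add: algebra_simps)
    then have xl: "x \<le> f + \<delta>" using h by simp
    have "U x > V e - h * f - h * \<delta> + x * (e + h)" using x m1 by simp
    moreover have "x * (e + h) \<ge> 0" using x eh by simp
    ultimately have "U x > V e - h * (f + \<delta>)" by (simp add: algebra_simps)
    moreover have "U x \<le> U (f + \<delta>)" using monoD'[OF x(1) xl] .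
    ultimately show ?thesis by simp
  qed
  then have "U (f + \<delta>) \<ge> V e" by (intro small_h[of "f + \<delta>"]) (use f \<delta> in auto)
  with lt show False by simp
qed

lemma Klemma:
  assumes c: "c > 0"
  shows "\<exists>K\<ge>0. \<forall>g t. g > 0 \<longrightarrow> 0 \<le> t \<longrightarrow> t \<le> 1 \<longrightarrow>
            (t * U g + (1 - t) * U c) / (1 + C) - K \<le> U (c + t * g)"
proof -
  define F0 where "F0 = max 1 (2 * (V (\<eta>0/2) - U 1 + \<eta>0) / \<eta>0)"
  define K where "K = \<bar>U c\<bar> + \<bar>V 1\<bar> + \<bar>F0\<bar>"
  have "(t * U g + (1 - t) * U c) / (1 + C) - K \<le> U (c + t * g)"
    if g: "g > 0" and t: "0 \<le> t" "t \<le> 1" for g t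
  proof -
    define f where "f = c + t * g"
    have "t * g \<ge> 0" using t g by simp
    then have f0: "f > 0" "c \<le> f" using c by (auto simp: f_def)
    have key: "t * U g + (1 - t) * U c \<le> V \<eta> + \<eta> * f" if "\<eta> > 0" for \<eta>
    proof -
      have "t * U g \<le> t * (V \<eta> + \<eta> * g)" using U_le[OF that g] t by (intro mult_left_mono) auto
      moreover have "(1 - t) * U c \<le> (1 - t) * (V \<eta> + \<eta> * c)"
        using U_le[OF that c] t by (intro mult_left_mono) auto
      moreover have "t * (V \<eta> + \<eta> * g) + (1 - t) * (V \<eta> + \<eta> * c) = V \<eta> + \<eta> * f - \<eta> * t * c"
        unfolding f_def by algebra
      moreover have "\<eta> * t * c \<ge> 0" using that t c by simp
      ultimately show ?thesis by linarith
    qed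
    have C0: "1 + C > 0" using C1 by simp
    show ?thesis
    proof (cases "f \<le> F0")
      case True
      have "t * U g + (1 - t) * U c \<le> V 1 + F0" using key[of 1] True by simp
      then have "(t * U g + (1 - t) * U c) / (1 + C) \<le> (V 1 + F0) / (1 + C)"
        using C0 by (intro divide_right_mono) auto
      also have "\<dots> \<le> \<bar>V 1\<bar> + \<bar>F0\<bar>"
      proof -
        have "(V 1 + F0) / (1 + C) \<le> \<bar>V 1 + F0\<bar> / (1 + C)"
          by (rule divide_right_mono) (use C0 in auto)
        also have "\<dots> \<le> \<bar>V 1 + F0\<bar>" using C1
        proof -
          have "\<bar>V 1 + F0\<bar> * 1 \<le> \<bar>V 1 + F0\<bar> * (1 + C)" using C1 by (intro mult_left_mono) auto
          then show ?thesis using C0 by (simp add: divide_le_eq)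
        qed
        also have "\<dots> \<le> \<bar>V 1\<bar> + \<bar>F0\<bar>" by (rule abs_triangle_ineq)
        finally show ?thesis .
      qed
      finally have "(t * U g + (1 - t) * U c) / (1 + C) - K \<le> - \<bar>U c\<bar>" by (simp add: K_def)
      also have "\<dots> \<le> U f" using monoD'[OF c f0(2)] by simp
      finally show ?thesis by (simp add: f_def)
    next
      case False
      then have fF: "f > F0" by simp
      obtain e where e: "e > 0" "\<And>z. z > 0 \<Longrightarrow> V e + e * f \<le> V z + z * f"
        using minimizer[OF f0(1)] by blast
      have f1: "f \<ge> 1" using fF by (simp add: F0_def)
      have ee: "e < \<eta>0"
      proof (rule ccontr)
        assume "\<not> e < \<eta>0"
        then have ge: "e \<ge> \<eta>0" by simp
        have "U 1 - 1 * e \<le> V e" using V_ge[of e 1] e by simp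
        moreover have "\<eta>0 * (f - 1) \<le> e * (f - 1)" using ge f1 by (intro mult_right_mono) auto
        moreover have "V e + e * f \<le> V (\<eta>0/2) + (\<eta>0/2) * f" using e(2)[of "\<eta>0/2"] eta0 by simp
        ultimately have "U 1 + \<eta>0 * f - \<eta>0 \<le> V (\<eta>0/2) + (\<eta>0/2) * f" by (simp add: algebra_simps)
        then have "\<eta>0 * f \<le> 2 * (V (\<eta>0/2) - U 1 + \<eta>0)" by (simp add: algebra_simps)
        then have "f \<le> 2 * (V (\<eta>0/2) - U 1 + \<eta>0) / \<eta>0" using eta0
          by (simp add: le_divide_eq mult.commute)
        with fF show False by (simp add: F0_def)
      qed
      have "- f \<in> subdiff_V U e" using e(2) by (auto simp: subdiff_V_def algebra_simps)
      from eae[OF e(1) ee this] have "f * e \<le> C * V e" using f0 by simp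
      moreover have "V e \<le> U f" using min_le_U[OF f0(1) e] .
      moreover have "t * U g + (1 - t) * U c \<le> V e + e * f" using key[OF e(1)] .
      moreover have "C * V e \<le> C * U f" using C1 \<open>V e \<le> U f\<close> by (intro mult_left_mono) auto
      ultimately have "t * U g + (1 - t) * U c \<le> (1 + C) * U f"
        by (simp add: algebra_simps)
      then have "(t * U g + (1 - t) * U c) / (1 + C) \<le> U f" using C0 by (simp add: divide_le_eq mult.commute)
      moreover have "K \<ge> 0" by (simp add: K_def)
      ultimately show ?thesis by (simp add: f_def)
    qed
  qed
  moreover have "K \<ge> 0" by (simp add: K_def)
  ultimately show ?thesis by blast
qed


lemma infy:
  assumes P: "prob_space M" and Zm: "ZT \<in> borel_measurable M" and Zp: "\<forall>w\<in>space M. 0 < ZT w"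
    and y0: "y0 > 0" "y0 \<le> y"
    and inf: "(\<integral>\<^sup>+ w. ennreal (V (y0 * ZT w)) \<partial>M) = \<infinity>"
  shows "(\<integral>\<^sup>+ w. ennreal (V (y * ZT w)) \<partial>M) = \<infinity>"
proof (rule ccontr)
  interpret prob_space M by (rule P)
  assume fin: "(\<integral>\<^sup>+ w. ennreal (V (y * ZT w)) \<partial>M) \<noteq> \<infinity>"
  obtain K1 where K1: "K1 > 0" "\<And>z. z > 0 \<Longrightarrow> y * z < \<eta>0 \<Longrightarrow> V (y0 * z) \<le> K1 * V (y * z)"
    using growth[OF y0] by blast
  define c0 where "c0 = \<bar>V (y0 * \<eta>0 / y)\<bar>"
  have ypos: "y > 0" using y0 by simp
  have pw: "ennreal (V (y0 * ZT w)) \<le> ennreal K1 * ennreal (V (y * ZT w)) + ennreal c0"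
    if w: "w \<in> space M" for w
  proof (cases "y * ZT w < \<eta>0")
    case True
    have z: "ZT w > 0" using Zp w by simp
    have "V (y * ZT w) \<ge> 1" using Vpos True z ypos by simp
    have "ennreal (V (y0 * ZT w)) \<le> ennreal (K1 * V (y * ZT w))"
      using K1(2)[OF z True] by (rule ennreal_leI)
    also have "\<dots> = ennreal K1 * ennreal (V (y * ZT w))"
      using K1 \<open>V (y * ZT w) \<ge> 1\<close> by (intro ennreal_mult) auto
    finally show ?thesis by (simp add: add_increasing2)
  next
    case False
    have z: "ZT w > 0" using Zp w by simp
    have "y0 * \<eta>0 / y \<le> y0 * ZT w"
    proof -
      have "\<eta>0 \<le> y * ZT w" using False by simp
      then have "y0 * \<eta>0 \<le> y0 * (y * ZT w)" using y0 by (intro mult_left_mono) auto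
      then show ?thesis using ypos by (simp add: divide_le_eq algebra_simps)
    qed
    then have "V (y0 * ZT w) \<le> V (y0 * \<eta>0 / y)" using y0 eta0 ypos by (intro V_antimono) auto
    then have "V (y0 * ZT w) \<le> c0" unfolding c0_def by simp
    then have "ennreal (V (y0 * ZT w)) \<le> ennreal c0" by (rule ennreal_leI)
    then show ?thesis by (simp add: add_increasing)
  qed
  have m1: "(\<lambda>w. V (y * ZT w)) \<in> borel_measurable M"
    using V_meas[of "\<lambda>w. y * ZT w" M] Zm Zp ypos by simp
  have "\<infinity> = (\<integral>\<^sup>+ w. ennreal (V (y0 * ZT w)) \<partial>M)" using inf by simp
  also have "\<dots> \<le> (\<integral>\<^sup>+ w. ennreal K1 * ennreal (V (y * ZT w)) + ennreal c0 \<partial>M)"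
    by (intro nn_integral_mono pw)
  also have "\<dots> = (\<integral>\<^sup>+ w. ennreal K1 * ennreal (V (y * ZT w)) \<partial>M) + (\<integral>\<^sup>+ w. ennreal c0 \<partial>M)"
    by (rule nn_integral_add) (use m1 in auto)
  also have "\<dots> = ennreal K1 * (\<integral>\<^sup>+ w. ennreal (V (y * ZT w)) \<partial>M) + ennreal c0"
    using m1 by (simp add: nn_integral_cmult emeasure_space_1)
  finally have "ennreal K1 * (\<integral>\<^sup>+ w. ennreal (V (y * ZT w)) \<partial>M) + ennreal c0 = \<infinity>"
    by (simp add: top_unique)
  then show False using fin by (simp add: ennreal_mult_eq_top_iff)
qed

lemma dir2:
  assumes P: "prob_space M" and Zm: "ZT \<in> borel_measurable M" and Zp: "\<forall>w\<in>space M. 0 < ZT w"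
    and Zi: "integrable M ZT" and Z1: "(\<integral>w. ZT w \<partial>M) = 1"
    and y0: "y0 > 0" and inf: "(\<integral>\<^sup>+ w. ennreal (V (y0 * ZT w)) \<partial>M) = \<infinity>"
    and x: "x > 0"
  shows "\<exists>f\<in>budget_set M ZT x. ereal M0 \<le> expected_utility M U f"
proof -
  interpret prob_space M by (rule P)
  define c where "c = x / 2"
  have c: "c > 0" using x by (simp add: c_def)
  obtain K where K: "K \<ge> 0" "\<And>g t. g > 0 \<Longrightarrow> 0 \<le> t \<Longrightarrow> t \<le> 1 \<Longrightarrow>
            (t * U g + (1 - t) * U c) / (1 + C) - K \<le> U (c + t * g)"
    using Klemma[OF c] by blast
  define D where "D = \<bar>U c\<bar> + K"
  have D: "D \<ge> 0" using K by (simp add: D_def)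
  define T where "T = M0 + 2 * D"
  define Mp where "Mp = (1 + C) * max T 0"
  have Mp: "Mp \<ge> 0" "Mp \<ge> (1 + C) * T" using C1 by (auto simp: Mp_def intro: mult_left_mono)
  define y where "y = max y0 (4 * Mp / x + 1)"
  have y: "y > 0" "y0 \<le> y" "4 * Mp / x \<le> y" using y0 by (auto simp: y_def)
  define W where "W = (\<lambda>w. V (y * ZT w) - 1)"
  have Vm: "(\<lambda>w. V (y * ZT w)) \<in> borel_measurable M"
    using V_meas[of "\<lambda>w. y * ZT w" M] Zm Zp y by simp
  then have Wm[measurable]: "W \<in> borel_measurable M" unfolding W_def by simp
  have infW: "(\<integral>\<^sup>+ w. ennreal (W w) \<partial>M) = \<infinity>"
  proof -
    have "\<infinity> = (\<integral>\<^sup>+ w. ennreal (V (y * ZT w)) \<partial>M)" using infy[OF P Zm Zp y0 y(2) inf] by simp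
    also have "\<dots> \<le> (\<integral>\<^sup>+ w. ennreal (W w) + ennreal 1 \<partial>M)"
      by (intro nn_integral_mono) (metis W_def diff_add_cancel ennreal_add_le)
    also have "\<dots> = (\<integral>\<^sup>+ w. ennreal (W w) \<partial>M) + 1"
      by (subst nn_integral_add) (auto simp: emeasure_space_1)
    finally show ?thesis by (simp add: top_unique)
  qed
  define k where "k = (\<lambda>w. \<lfloor>log 2 (y * ZT w)\<rfloor>)"
  have km[measurable]: "k \<in> measurable M (count_space UNIV)"
    unfolding k_def by (rule measurable_compose[OF _ measurable_real_floor]) (use Zm in simp)
  define E where "E = (\<lambda>w. 2 powr real_of_int (k w))"
  have E: "E w > 0" "E w \<le> y * ZT w" "y * ZT w < 2 * E w" if "w \<in> space M" for w
    using cell[of "y * ZT w"] Zp that y by (auto simp: E_def k_def)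
  define Gf where "Gf = (\<lambda>j::int. SOME g. g > 0 \<and> U g - g * 2 powr real_of_int j > V (2 powr real_of_int j) - 1)"
  have Gf: "Gf j > 0 \<and> U (Gf j) - Gf j * 2 powr real_of_int j > V (2 powr real_of_int j) - 1" for j
    unfolding Gf_def by (rule someI_ex) (use V_near[of "2 powr real_of_int j" 1] in auto)
  define g where "g = (\<lambda>w. Gf (k w))"
  have gm[measurable]: "g \<in> borel_measurable M"
    unfolding g_def by (rule measurable_compose_countable[OF _ km]) simp
  have g0: "g w > 0" for w using Gf by (simp add: g_def)
  have Ug: "U (g w) \<ge> W w + y * ZT w * g w / 2" if w: "w \<in> space M" for w
  proof -
    have "U (g w) - g w * E w > V (E w) - 1" using Gf by (simp add: g_def E_def)
    moreover have "V (y * ZT w) \<le> V (E w)" using E[OF w] by (intro V_antimono) auto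
    moreover have "g w * (y * ZT w) \<le> g w * (2 * E w)" using E[OF w] g0[of w] by (intro mult_left_mono) auto
    ultimately show ?thesis unfolding W_def by (simp add: algebra_simps)
  qed
  define A where "A = (\<lambda>n::nat. {w\<in>space M. \<bar>k w\<bar> \<le> int n \<and> 0 \<le> W w})"
  have Am[measurable]: "A n \<in> sets M" for n
  proof -
    have "A n = (k -` {j. \<bar>j\<bar> \<le> int n} \<inter> space M) \<inter> {w\<in>space M. 0 \<le> W w}"
      by (auto simp: A_def)
    moreover have "k -` {j. \<bar>j\<bar> \<le> int n} \<inter> space M \<in> sets M" by (rule measurable_sets[OF km]) simp
    moreover have "{w\<in>space M. 0 \<le> W w} \<in> sets M" by measurable
    ultimately show ?thesis by simp
  qed
  define fn where "fn = (\<lambda>n w. ennreal (W w) * indicator (A n) w)"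
  have fnm[measurable]: "fn n \<in> borel_measurable M" for n unfolding fn_def by measurable
  have inc: "incseq fn"
  proof (rule incseq_SucI, rule le_funI)
    fix n w
    have "indicator (A n) w \<le> (indicator (A (Suc n)) w :: ennreal)"
      by (auto simp: A_def indicator_def)
    then show "fn n w \<le> fn (Suc n) w" unfolding fn_def by (rule mult_left_mono) simp
  qed
  have sup: "(SUP n. fn n w) = ennreal (W w)" if w: "w \<in> space M" for w
  proof (cases "W w \<ge> 0")
    case False
    then show ?thesis by (simp add: fn_def ennreal_neg)
  next
    case True
    have "w \<in> A (nat \<bar>k w\<bar>)" using w True by (auto simp: A_def)
    then have "fn (nat \<bar>k w\<bar>) w = ennreal (W w)" by (simp add: fn_def)
    moreover have "fn n w \<le> ennreal (W w)" for n by (simp add: fn_def indicator_def)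
    ultimately show ?thesis by (metis SUP_upper UNIV_I SUP_least antisym)
  qed
  have "(SUP n. (\<integral>\<^sup>+ w. fn n w \<partial>M)) = (\<integral>\<^sup>+ w. (SUP n. fn n w) \<partial>M)"
    by (rule nn_integral_monotone_convergence_SUP[symmetric, OF inc fnm])
  also have "\<dots> = (\<integral>\<^sup>+ w. ennreal (W w) \<partial>M)" by (rule nn_integral_cong) (simp add: sup)
  finally have "(SUP n. (\<integral>\<^sup>+ w. fn n w \<partial>M)) = \<infinity>" using infW by simp
  then have obtn: "\<exists>n. ennreal Mp < (\<integral>\<^sup>+ w. fn n w \<partial>M)"
    by (metis ennreal_less_top infinity_ennreal_def less_SUP_iff)
  then obtain n where n: "ennreal Mp < (\<integral>\<^sup>+ w. fn n w \<partial>M)" by blast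
  define Wa where "Wa = (\<lambda>w. W w * indicator (A n) w)"
  define Ga where "Ga = (\<lambda>w. ZT w * g w * indicator (A n) w)"
  have Wam[measurable]: "Wa \<in> borel_measurable M" unfolding Wa_def by measurable
  have Gam[measurable]: "Ga \<in> borel_measurable M" unfolding Ga_def using Zm by measurable
  define Gm where "Gm = Max (Gf ` {-int n..int n})"
  have inA: "- int n \<le> k w" "k w \<le> int n" "0 \<le> W w" "w \<in> space M" if "w \<in> A n" for w
    using that by (auto simp: A_def)
  have EA: "2 powr (- real n) \<le> E w" "E w \<le> 2 powr real n" if "w \<in> A n" for w
    using inA[OF that] by (auto simp: E_def intro!: powr_mono)
  have Wa_b: "norm (Wa w) \<le> \<bar>V (2 powr (- real n))\<bar> + 1" if w: "w \<in> space M" for w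
  proof (cases "w \<in> A n")
    case True
    have "2 powr (- real n) \<le> y * ZT w" using EA[OF True] E[OF w] by linarith
    then have "V (y * ZT w) \<le> V (2 powr (- real n))" by (intro V_antimono) auto
    then show ?thesis using inA[OF True] True by (simp add: Wa_def W_def)
  qed (simp add: Wa_def)
  have Ga_b: "norm (Ga w) \<le> 2 * 2 powr real n / y * Gm" if w: "w \<in> space M" for w
  proof (cases "w \<in> A n")
    case True
    have "ZT w \<le> 2 * 2 powr real n / y"
    proof -
      have "y * ZT w \<le> 2 * 2 powr real n" using EA[OF True] E[OF w] by linarith
      then show ?thesis using y by (simp add: le_divide_eq mult.commute)
    qed
    moreover have "g w \<le> Gm" unfolding g_def Gm_def using inA[OF True] by (intro Max_ge) auto
    moreover have "0 \<le> ZT w" "0 \<le> g w" using Zp w g0[of w] by auto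
    ultimately have "ZT w * g w \<le> 2 * 2 powr real n / y * Gm" by (intro mult_mono) auto
    then show ?thesis using True \<open>0 \<le> ZT w\<close> \<open>0 \<le> g w\<close> by (simp add: Ga_def)
  next
    case False
    have "Gf 0 \<le> Gm" unfolding Gm_def by (intro Max_ge) auto
    then have "0 \<le> Gm" using Gf[of 0] by simp
    then show ?thesis using False y by (simp add: Ga_def)
  qed
  have Wai: "integrable M Wa" by (rule integrable_const_bound[OF AE_I2[OF Wa_b] Wam])
  have Gai: "integrable M Ga" by (rule integrable_const_bound[OF AE_I2[OF Ga_b] Gam])
  have Wa0: "Wa w \<ge> 0" for w by (auto simp: Wa_def A_def indicator_def)
  have Ga0: "w \<in> space M \<Longrightarrow> Ga w \<ge> 0" for w using Zp g0[of w] by (auto simp: Ga_def indicator_def)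
  define S where "S = (\<integral>w. Wa w \<partial>M)"
  define B where "B = (\<integral>w. Ga w \<partial>M)"
  have B0: "B \<ge> 0" unfolding B_def using Ga0 by (intro integral_nonneg_AE AE_I2) auto
  have S0: "S \<ge> 0" unfolding S_def using Wa0 by (intro integral_nonneg_AE AE_I2) auto
  have "(\<integral>\<^sup>+ w. fn n w \<partial>M) = (\<integral>\<^sup>+ w. ennreal (Wa w) \<partial>M)"
    by (rule nn_integral_cong) (auto simp: fn_def Wa_def indicator_def)
  also have "\<dots> = ennreal S" unfolding S_def using Wa0 by (intro nn_integral_eq_integral Wai AE_I2) auto
  finally have MpS: "Mp < S" using n Mp(1) by (simp add: ennreal_less_iff)
  define t where "t = (if B \<le> x/2 then 1 else (x/2)/B)"
  have t: "0 \<le> t" "t \<le> 1" "t * B \<le> x/2" using B0 x by (auto simp: t_def)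
  have tS: "Mp \<le> t * (S + y * B / 2)"
  proof (cases "B \<le> x/2")
    case True
    have "y * B / 2 \<ge> 0" using B0 y by simp
    then show ?thesis using MpS True by (simp add: t_def)
  next
    case False
    then have Bp: "B > 0" using x by simp
    have "t * (S + y * B / 2) = t * S + x * y / 4" using Bp False by (simp add: t_def field_simps)
    moreover have "t * S \<ge> 0" using t S0 by simp
    moreover have "Mp \<le> x * y / 4"
    proof -
      have "4 * Mp \<le> y * x" using y(3) x by (simp add: divide_le_eq)
      then show ?thesis by (simp add: mult.commute)
    qed
    ultimately show ?thesis by simp
  qed
  define f where "f = (\<lambda>w. c + t * (g w * indicator (A n) w))"
  have fc: "f w \<ge> c" for w using t g0[of w] by (simp add: f_def indicator_def)
  have fm[measurable]: "f \<in> borel_measurable M" unfolding f_def by measurable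
  have Zf: "ZT w * f w = c * ZT w + t * Ga w" for w by (simp add: f_def Ga_def algebra_simps)
  have Zfi: "integrable M (\<lambda>w. ZT w * f w)" unfolding Zf using Zi Gai by auto
  have intZf: "(\<integral>w. ZT w * f w \<partial>M) = c + t * B"
    unfolding Zf using Zi Gai Z1 by (simp add: B_def)
  have Zf0: "0 \<le> ZT w * f w" if "w \<in> space M" for w
    using Zp fc[of w] c that by (intro mult_nonneg_nonneg) auto
  have "(\<integral>\<^sup>+ w. ennreal (ZT w * f w) \<partial>M) = ennreal (c + t * B)"
    using Zf0 by (subst nn_integral_eq_integral[OF Zfi]) (auto intro!: AE_I2 simp: intZf)
  also have "\<dots> \<le> ennreal x" using t by (intro ennreal_leI) (simp add: c_def)
  finally have budget: "f \<in> budget_set M ZT x"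
    unfolding budget_set_def using fc c by (auto intro: order_trans[OF less_imp_le])
  define h where "h = (\<lambda>w. U (f w))"
  have hm[measurable]: "h \<in> borel_measurable M"
  proof -
    have "mono (\<lambda>v. U (max v c))" by (rule monoI) (use c in \<open>auto intro: monoD'\<close>)
    then have "(\<lambda>v. U (max v c)) \<in> borel_measurable borel" by (rule borel_measurable_mono)
    from measurable_compose[OF fm this] have "(\<lambda>w. U (max (f w) c)) \<in> borel_measurable M" .
    moreover have "max (f w) c = f w" for w using fc[of w] by simp
    ultimately show ?thesis unfolding h_def by simp
  qed
  define \<psi> where "\<psi> = (\<lambda>w. t * (Wa w + y * Ga w / 2) / (1 + C))"
  have C0: "1 + C > 0" using C1 by simp
  have psi0: "\<psi> w \<ge> 0" if "w \<in> space M" for w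
    using Wa0[of w] Ga0[OF that] t y C0 unfolding \<psi>_def by (intro divide_nonneg_pos mult_nonneg_nonneg add_nonneg_nonneg) auto
  have psih: "\<psi> w \<le> h w + D" if w: "w \<in> space M" for w
  proof (cases "w \<in> A n")
    case True
    have fw: "f w = c + t * g w" using True by (simp add: f_def)
    have k1: "(t * U (g w) + (1 - t) * U c) / (1 + C) - K \<le> h w"
      using K(2)[OF g0 t(1) t(2)] fw by (simp add: h_def)
    have ug: "Wa w + y * Ga w / 2 \<le> U (g w)" using Ug[OF w] True by (simp add: Wa_def Ga_def algebra_simps)
    have a1: "t * (Wa w + y * Ga w / 2) \<le> t * U (g w)" by (rule mult_left_mono[OF ug t(1)])
    have a2: "- ((1 + C) * \<bar>U c\<bar>) \<le> (1 - t) * U c"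
    proof -
      have "(1 - t) * \<bar>U c\<bar> \<le> 1 * \<bar>U c\<bar>" using t by (intro mult_right_mono) auto
      moreover have "\<bar>U c\<bar> \<le> (1 + C) * \<bar>U c\<bar>" using C1 by (simp add: mult_le_cancel_right1)
      moreover have "(1 - t) * (- \<bar>U c\<bar>) \<le> (1 - t) * U c" using t by (intro mult_left_mono) auto
      ultimately show ?thesis by simp
    qed
    have "\<psi> w - \<bar>U c\<bar> = (t * (Wa w + y * Ga w / 2) - (1 + C) * \<bar>U c\<bar>) / (1 + C)"
      unfolding \<psi>_def using C0 by (simp add: field_simps)
    also have "\<dots> \<le> (t * U (g w) + (1 - t) * U c) / (1 + C)"
      using a1 a2 C0 by (intro divide_right_mono) auto
    finally show ?thesis using k1 by (simp add: D_def)
  next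
    case False
    then have "f w = c" "\<psi> w = 0" by (simp_all add: f_def \<psi>_def Wa_def Ga_def)
    then show ?thesis using K by (simp add: h_def D_def)
  qed
  have psii: "integrable M \<psi>" unfolding \<psi>_def using Wai Gai by auto
  have intpsi: "(\<integral>w. \<psi> w \<partial>M) = t * (S + y * B / 2) / (1 + C)"
    unfolding \<psi>_def using Wai Gai by (simp add: S_def B_def)
  have Tpsi: "T \<le> (\<integral>w. \<psi> w \<partial>M)"
  proof -
    have "(1 + C) * T \<le> t * (S + y * B / 2)" using tS Mp by linarith
    then show ?thesis unfolding intpsi using C0 by (simp add: le_divide_eq mult.commute)
  qed
  have e2m: "e2ennreal (max 0 (ereal r)) = ennreal r" for r
    by (cases "r \<ge> 0") (auto simp: max_def ennreal_neg zero_ereal_def)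
  have Ue: "Uext U (f w) = ereal (h w)" for w using fc[of w] c by (simp add: Uext_def h_def)
  define Pp where "Pp = (\<integral>\<^sup>+ w. e2ennreal (max 0 (Uext U (f w))) \<partial>M)"
  define Nn where "Nn = (\<integral>\<^sup>+ w. e2ennreal (max 0 (- Uext U (f w))) \<partial>M)"
  have Pp_eq: "Pp = (\<integral>\<^sup>+ w. ennreal (h w) \<partial>M)" unfolding Pp_def Ue by (simp add: e2m)
  have Nn_eq: "Nn = (\<integral>\<^sup>+ w. ennreal (- h w) \<partial>M)" unfolding Nn_def Ue
    by (simp add: e2m[symmetric])
  have "Nn \<le> (\<integral>\<^sup>+ w. ennreal D \<partial>M)" unfolding Nn_eq
  proof (rule nn_integral_mono)
    fix w assume "w \<in> space M"
    then have "- h w \<le> D" using psih psi0 by fastforce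
    then show "ennreal (- h w) \<le> ennreal D" by (rule ennreal_leI)
  qed
  then have NnD: "Nn \<le> ennreal D" by (simp add: emeasure_space_1)
  have "ennreal (\<integral>w. \<psi> w \<partial>M) = (\<integral>\<^sup>+ w. ennreal (\<psi> w) \<partial>M)"
    using psi0 by (intro nn_integral_eq_integral[symmetric] psii AE_I2) auto
  also have "\<dots> \<le> (\<integral>\<^sup>+ w. ennreal (h w) + ennreal D \<partial>M)"
  proof (rule nn_integral_mono)
    fix w assume "w \<in> space M"
    then have "ennreal (\<psi> w) \<le> ennreal (h w + D)" using psih by (intro ennreal_leI) auto
    also have "\<dots> \<le> ennreal (h w) + ennreal D" by (rule ennreal_add_le)
    finally show "ennreal (\<psi> w) \<le> ennreal (h w) + ennreal D" .
  qed
  also have "\<dots> = Pp + ennreal D" unfolding Pp_eq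
    by (subst nn_integral_add) (auto simp: emeasure_space_1)
  finally have PpD: "ennreal (\<integral>w. \<psi> w \<partial>M) \<le> Pp + ennreal D" .
  have NnE: "enn2ereal Nn \<le> ereal D" using NnD D by (simp add: less_eq_ennreal.rep_eq)
  have PpE: "ereal (\<integral>w. \<psi> w \<partial>M) \<le> enn2ereal Pp + ereal D"
  proof -
    have i0: "(\<integral>w. \<psi> w \<partial>M) \<ge> 0" using psi0 by (intro integral_nonneg_AE AE_I2) auto
    from PpD have "enn2ereal (ennreal (\<integral>w. \<psi> w \<partial>M)) \<le> enn2ereal (Pp + ennreal D)"
      by (simp add: less_eq_ennreal.rep_eq)
    then show ?thesis using i0 D by (simp add: plus_ennreal.rep_eq)
  qed
  have Nfin: "Nn \<noteq> \<infinity>" using NnD by (auto simp: top_unique)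
  have expu: "expected_utility M U f = enn2ereal Pp - enn2ereal Nn"
    using Nfin by (simp add: expected_utility_def Pp_def Nn_def Let_def)
  have ex: "ereal M0 \<le> expected_utility M U f"
  proof -
    obtain q where q: "enn2ereal Nn = ereal q" "q \<le> D"
      using NnE enn2ereal_nonneg[of Nn] by (cases "enn2ereal Nn") auto
    show ?thesis
    proof (cases "enn2ereal Pp")
      case (real p)
      then have "(\<integral>w. \<psi> w \<partial>M) \<le> p + D" using PpE by simp
      then show ?thesis unfolding expu using real q Tpsi by (simp add: T_def)
    next
      case PInf
      then show ?thesis unfolding expu using q by simp
    next
      case MInf
      then show ?thesis using enn2ereal_nonneg[of Pp] by simp
    qed
  qed
  show ?thesis using budget ex by blast
qed
end

theorem lemma3p2:
  fixes M :: "'a measure" and ZT :: "'a \<Rightarrow> real" and U :: "real \<Rightarrow> real"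
  assumes "prob_space M"
    and "ZT \<in> borel_measurable M"
    and "\<forall>w\<in>space M. 0 < ZT w"
    and "integrable M ZT"
    and "(\<integral>w. ZT w \<partial>M) = 1"
    and "is_utility U"
    and "EAE U < \<infinity>"
  shows "(\<forall>y>0. (\<integral>\<^sup>+ w. ennreal (conj_V U (y * ZT w)) \<partial>M) < \<infinity>)
         \<longleftrightarrow> (\<exists>x>0. value_fun M ZT x U < \<infinity>)"
proof -
  have ut: "util U" using assms(6) unfolding is_utility_def util_def by blast
  interpret util U by (rule ut)
  show ?thesis
  proof
    assume L: "\<forall>y>0. (\<integral>\<^sup>+ w. ennreal (conj_V U (y * ZT w)) \<partial>M) < \<infinity>"
    then have "(\<integral>\<^sup>+ w. ennreal (conj_V U (ZT w)) \<partial>M) < \<infinity>" using L[rule_format, of 1] by simp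
    then have "value_fun M ZT 1 U < \<infinity>" by (rule dir1[OF assms(1-3)])
    then show "\<exists>x>0. value_fun M ZT x U < \<infinity>" by (intro exI[of _ 1]) auto
  next
    assume "\<exists>x>0. value_fun M ZT x U < \<infinity>"
    then obtain x where x: "x > 0" "value_fun M ZT x U < \<infinity>" by blast
    show "\<forall>y>0. (\<integral>\<^sup>+ w. ennreal (conj_V U (y * ZT w)) \<partial>M) < \<infinity>"
    proof (rule ccontr)
      assume "\<not> ?thesis"
      then obtain y0 where y0: "y0 > 0" and "\<not> (\<integral>\<^sup>+ w. ennreal (conj_V U (y0 * ZT w)) \<partial>M) < \<infinity>"
        by blast
      then have inf: "(\<integral>\<^sup>+ w. ennreal (conj_V U (y0 * ZT w)) \<partial>M) = \<infinity>"
        by (simp add: less_top[symmetric])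
      interpret prob_space M by (rule assms(1))
      show False
      proof (cases "\<exists>B. \<forall>z>0. U z \<le> B")
        case True
        then obtain B where B: "\<And>z. z > 0 \<Longrightarrow> U z \<le> B" by blast
        have "(\<integral>\<^sup>+ w. ennreal (conj_V U (y0 * ZT w)) \<partial>M) \<le> (\<integral>\<^sup>+ w. ennreal B \<partial>M)"
        proof (rule nn_integral_mono)
          fix w assume w: "w \<in> space M"
          have pos: "y0 * ZT w > 0" using y0 assms(3) w by simp
          have "conj_V U (y0 * ZT w) \<le> B"
          proof (rule V_le[OF pos])
            fix z :: real assume "z > 0"
            then have "U z \<le> B" "z * (y0 * ZT w) \<ge> 0" using B pos by auto
            then show "U z - z * (y0 * ZT w) \<le> B" by simp
          qed
          then show "ennreal (conj_V U (y0 * ZT w)) \<le> ennreal B" by (rule ennreal_leI)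
        qed
        also have "\<dots> = ennreal B" by (simp add: emeasure_space_1)
        finally show False using inf by (simp add: top_unique)
      next
        case False
        then have unb: "\<And>B. \<exists>z>0. U z > B" by (meson not_le)
        obtain r where r: "EAE U < ereal r" using ereal_dense2[OF assms(7)] by blast
        have "\<forall>\<^sub>F y in at_right 0. (SUP q\<in>subdiff_V U y. ereal (\<bar>q\<bar> * y / conj_V U y)) < ereal r"
          using Limsup_lessD[OF r[unfolded EAE_def]] .
        then obtain b where b: "b > 0"
          "\<And>y. y > 0 \<Longrightarrow> y < b \<Longrightarrow> (SUP q\<in>subdiff_V U y. ereal (\<bar>q\<bar> * y / conj_V U y)) < ereal r"
          unfolding eventually_at_right_field by auto
        obtain x1 where x1: "x1 > 0" "U x1 > 2" using unb by blast
        define \<eta>0 where "\<eta>0 = min b (1 / x1)"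
        define C where "C = max 1 r"
        have e0: "\<eta>0 > 0" using b x1 by (simp add: \<eta>0_def)
        have Vpos: "conj_V U y \<ge> 1" if "0 < y" "y < \<eta>0" for y
        proof -
          have "y < 1 / x1" using that by (simp add: \<eta>0_def)
          then have "x1 * y < 1" using x1 by (simp add: less_divide_eq mult.commute)
          moreover have "U x1 - x1 * y \<le> conj_V U y" using V_ge that x1 by simp
          ultimately show ?thesis using x1 by simp
        qed
        have eae: "\<bar>q\<bar> * y \<le> C * conj_V U y"
          if "0 < y" "y < \<eta>0" "q \<in> subdiff_V U y" for y q
        proof -
          have "y < b" using that by (simp add: \<eta>0_def)
          have "ereal (\<bar>q\<bar> * y / conj_V U y) \<le> (SUP q\<in>subdiff_V U y. ereal (\<bar>q\<bar> * y / conj_V U y))"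
            using that(3) by (rule SUP_upper)
          also have "\<dots> < ereal r" using b(2)[OF that(1) \<open>y < b\<close>] .
          finally have "\<bar>q\<bar> * y / conj_V U y < r" by simp
          moreover have Vp: "conj_V U y \<ge> 1" using Vpos that by simp
          ultimately have "\<bar>q\<bar> * y < r * conj_V U y" by (simp add: divide_less_eq)
          moreover have "r * conj_V U y \<le> C * conj_V U y" using Vp by (intro mult_right_mono) (auto simp: C_def)
          ultimately show ?thesis by simp
        qed
        have u2: "util2 U C \<eta>0"
          using ut unb e0 Vpos eae by (unfold_locales) (auto simp: C_def)
        have "value_fun M ZT x U = \<infinity>"
        proof (rule ereal_top)
          fix M0
          obtain f where f: "f \<in> budget_set M ZT x" "ereal M0 \<le> expected_utility M U f"
            using util2.dir2[OF u2 assms(1-5) y0 inf x(1), of M0] by blast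
          show "ereal M0 \<le> value_fun M ZT x U" unfolding value_fun_def
            using f by (intro SUP_upper2) auto
        qed
        with x(2) show False by simp
      qed
    qed
  qed
qed

end
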